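(* Let $\tau=\{\tau_1,\dots,\tau_n\}$ with $\tau_i=(T_i,C_i,D_i)$, $0<C_i\le D_i\le T_i$, let $m'$ be a positive integer, and let $R=\langle\Pi,\Theta,m'\rangle$ be an MPR model with $U_\tau<\Theta/\Pi$, where $U_\tau=\sum_{i=1}^n C_i/T_i$. Fix $k\in\{1,\dots,n\}$. Define - $C_\Sigma$ as the sum of the $m'-1$ largest values among $C_1,\dots,C_n$; - $U=\sum_{i=1}^n (T_i-D_i)\,C_i/T_i$; - $B=\frac{\Theta}{\Pi}\big[2+2(\Pi-\Theta/m')\big]$. If there is a real $A_k\ge0$ with $\mathrm{dem}_k(A_k+D_k,m')>\mathrm{sbf}_R(A_k+D_k)$, then there is such an $A_k\ge 0$ that also satisfies $$A_k<\frac{C_\Sigma+m'C_k-D_k\left(\frac{\Theta}{\Pi}-U_\tau\right)+U+B}{\frac{\Theta}{\Pi}-U_\tau}.$$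
   Context: MPR model: $R=\langle\Pi,\Theta,m'\rangle$ with $\Pi>0$, $m'$ a positive integer and $0\le\Theta\le m'\Pi$. A supply pattern of $R$ is a piecewise-constant function $s:[0,\infty)\to\{0,1,\dots,m'\}$ with $\int_{j\Pi}^{(j+1)\Pi}s(t)\,dt=\Theta$ for every integer $j\ge0$. Then $$\mathrm{sbf}_R(t)=\inf\Big\{\int_{t_0}^{t_0+t}s(u)\,du: s\text{ a supply pattern of }R,\ t_0\ge0\Big\}.$$ Demand bound: for $t\ge0$ let $$CI_i(t)=\min\Big\{C_i,\max\Big\{0,\;t-\Big\lfloor\tfrac{t+T_i-D_i}{T_i}\Big\rfloor T_i\Big\}\Big\},\qquad W_i(t)=\Big\lfloor\tfrac{t+T_i-D_i}{T_i}\Big\rfloor C_i+CI_i(t).$$ Fix $k$ and $A\ge0$, and put $t=A+D_k$. For $i\ne k$ define $$\bar I_i=\min\{W_i(t),\,t-C_k\},\qquad \hat I_i=\min\{W_i(t)-CI_i(t),\,t-C_k\},$$ and for $i=k$ define $$\bar I_k=\min\{W_k(t)-C_k,\,A\},\qquad \hat I_k=\min\{W_k(t)-C_k-CI_k(t),\,A\}.$$ Then $$\mathrm{dem}_k(A+D_k,m')=m'C_k+\sum_{i=1}^n\hat I_i+S,$$ where $S$ is the sum of the $m'-1$ largest values among $\{\bar I_i-\hat I_i\}_{i=1}^n$ (all of them if $n\le m'-1$; $S=0$ if $m'=1$). $C_\Sigma$ is defined analogously: the sum of all $C_i$ if $n\le m'-1$, and $0$ if $m'=1$. *)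

theory Defs
  imports "HOL-Analysis.Analysis"
begin

text \<open>Tasks are indexed 1..n by functions T C D :: nat => real.\<close>

definition CI :: "real \<Rightarrow> real \<Rightarrow> real \<Rightarrow> real \<Rightarrow> real" where
  "CI Ti Ci Di t = min Ci (max 0 (t - of_int \<lfloor>(t + Ti - Di) / Ti\<rfloor> * Ti))"

definition W :: "real \<Rightarrow> real \<Rightarrow> real \<Rightarrow> real \<Rightarrow> real" where
  "W Ti Ci Di t = of_int \<lfloor>(t + Ti - Di) / Ti\<rfloor> * Ci + CI Ti Ci Di t"

text \<open>Ibar / Ihat of task i at t = A + D k (so A = t - D k).\<close>
definition Ibar :: "(nat \<Rightarrow> real) \<Rightarrow> (nat \<Rightarrow> real) \<Rightarrow> (nat \<Rightarrow> real) \<Rightarrow> nat \<Rightarrow> real \<Rightarrow> nat \<Rightarrow> real" where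
  "Ibar T C D k t i =
     (if i = k then min (W (T k) (C k) (D k) t - C k) (t - D k)
      else min (W (T i) (C i) (D i) t) (t - C k))"

definition Ihat :: "(nat \<Rightarrow> real) \<Rightarrow> (nat \<Rightarrow> real) \<Rightarrow> (nat \<Rightarrow> real) \<Rightarrow> nat \<Rightarrow> real \<Rightarrow> nat \<Rightarrow> real" where
  "Ihat T C D k t i =
     (if i = k then min (W (T k) (C k) (D k) t - C k - CI (T k) (C k) (D k) t) (t - D k)
      else min (W (T i) (C i) (D i) t - CI (T i) (C i) (D i) t) (t - C k))"

definition top_sum :: "nat \<Rightarrow> (nat \<Rightarrow> real) \<Rightarrow> nat \<Rightarrow> real" where
  "top_sum j f n = sum_list (take j (rev (sort (map f [1..<Suc n]))))"

definition dem :: "(nat \<Rightarrow> real) \<Rightarrow> (nat \<Rightarrow> real) \<Rightarrow> (nat \<Rightarrow> real) \<Rightarrow> nat \<Rightarrow> nat \<Rightarrow> real \<Rightarrow> nat \<Rightarrow> real" where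
  "dem T C D n k t m' =
     real m' * C k + (\<Sum>i=1..n. Ihat T C D k t i)
     + top_sum (m' - 1) (\<lambda>i. Ibar T C D k t i - Ihat T C D k t i) n"

definition piecewise_constant_nonneg :: "(real \<Rightarrow> nat) \<Rightarrow> bool" where
  "piecewise_constant_nonneg s \<longleftrightarrow>
     (\<forall>b\<ge>0. \<exists>P. finite P \<and>
        (\<forall>x y. 0 \<le> x \<longrightarrow> x \<le> y \<longrightarrow> y \<le> b \<longrightarrow> {x..y} \<inter> P = {} \<longrightarrow> s x = s y))"

definition supply_pattern :: "real \<Rightarrow> real \<Rightarrow> nat \<Rightarrow> (real \<Rightarrow> nat) \<Rightarrow> bool" where
  "supply_pattern Per Theta m s \<longleftrightarrow>
     piecewise_constant_nonneg s \<and> (\<forall>t\<ge>0. s t \<le> m) \<and>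
     (\<forall>j::nat. integral {real j * Per .. (real j + 1) * Per} (\<lambda>u. real (s u)) = Theta)"

definition sbf :: "real \<Rightarrow> real \<Rightarrow> nat \<Rightarrow> real \<Rightarrow> real" where
  "sbf Per Theta m t =
     Inf {integral {t0 .. t0 + t} (\<lambda>u. real (s u)) | s t0. supply_pattern Per Theta m s \<and> t0 \<ge> 0}"

end

theory Submission
  imports Defs
begin


lemma insort_mono_elem:
  fixes x y :: real
  assumes "x \<le> y" "sorted L"
  shows "list_all2 (\<le>) (insort x L) (insort y L)"
  using assms
proof (induction L)
  case Nil then show ?case by simp
next
  case (Cons a L)
  show ?case
  proof (cases "x \<le> a")
    case True
    show ?thesis
    proof (cases "y \<le> a")
      case True
      with \<open>x \<le> a\<close> Cons.prems show ?thesis by (simp add: list_all2_refl)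
    next
      case False
      have aux: "\<And>M. sorted (a#M) \<Longrightarrow> a \<le> y \<Longrightarrow> list_all2 (\<le>) (a#M) (insort y M)"
      proof -
        fix M show "sorted (a#M) \<Longrightarrow> a \<le> y \<Longrightarrow> list_all2 (\<le>) (a#M) (insort y M)"
        proof (induction M arbitrary: a)
          case Nil then show ?case by simp
        next
          case (Cons b M)
          show ?case
          proof (cases "y \<le> b")
            case True then show ?thesis using Cons.prems by (simp add: list_all2_refl)
          next
            case False
            have "list_all2 (\<le>) (b#M) (insort y M)" using Cons.IH[of b] Cons.prems False by simp
            then show ?thesis using Cons.prems False by simp
          qed
        qed
      qed
      have "list_all2 (\<le>) (a#L) (insort y L)" using aux[of L] Cons.prems False by simp
      then show ?thesis using True False by simp
    qed
  next
    case False
    then have "\<not> y \<le> a" using Cons.prems by simp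
    then show ?thesis using False Cons by simp
  qed
qed

lemma insort_mono_list:
  fixes x :: real
  assumes "list_all2 (\<le>) As Bs" "sorted As" "sorted Bs"
  shows "list_all2 (\<le>) (insort x As) (insort x Bs)"
  using assms
proof (induction As Bs rule: list_all2_induct)
  case Nil then show ?case by simp
next
  case (Cons a As b Bs)
  have aux: "\<And>As Bs b. sorted As \<Longrightarrow> list_all2 (\<le>) As Bs \<Longrightarrow> x \<le> b \<Longrightarrow> sorted (b#Bs)
     \<Longrightarrow> list_all2 (\<le>) (insort x As) (b#Bs)"
  proof -
    fix As Bs b show "sorted As \<Longrightarrow> list_all2 (\<le>) As Bs \<Longrightarrow> x \<le> b \<Longrightarrow> sorted (b#Bs)
     \<Longrightarrow> list_all2 (\<le>) (insort x As) (b#Bs)"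
    proof (induction As arbitrary: Bs b)
      case Nil then show ?case by simp
    next
      case (Cons a' As')
      then obtain b' Bs' where Bs: "Bs = b'#Bs'" by (cases Bs) auto
      show ?case
      proof (cases "x \<le> a'")
        case True then show ?thesis using Cons.prems Bs by simp
      next
        case False
        have "list_all2 (\<le>) (insort x As') (b'#Bs')"
          using Cons.IH[of Bs' b'] Cons.prems Bs by auto
        then show ?thesis using False Cons.prems Bs by auto
      qed
    qed
  qed
  show ?case
  proof (cases "x \<le> a")
    case True then show ?thesis using Cons by simp
  next
    case F1: False
    show ?thesis
    proof (cases "x \<le> b")
      case True
      have "list_all2 (\<le>) (insort x As) (b#Bs)" using aux[of As Bs b] Cons True by simp
      then show ?thesis using F1 True Cons by simp
    next
      case False then show ?thesis using F1 Cons by simp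
    qed
  qed
qed

lemma sort_mono:
  fixes xs ys :: "real list"
  assumes "list_all2 (\<le>) xs ys"
  shows "list_all2 (\<le>) (sort xs) (sort ys)"
  using assms
proof (induction xs ys rule: list_all2_induct)
  case Nil then show ?case by simp
next
  case (Cons x xs y ys)
  have "list_all2 (\<le>) (insort x (sort xs)) (insort x (sort ys))"
    by (rule insort_mono_list) (use Cons in auto)
  moreover have "list_all2 (\<le>) (insort x (sort ys)) (insort y (sort ys))"
    by (rule insort_mono_elem) (use Cons in auto)
  ultimately show ?case
    by (auto intro: list_all2_trans[of "(\<le>)" "(\<le>)" "(\<le>)"] order_trans)
qed

lemma sum_list_mono2:
  fixes xs ys :: "real list"
  shows "list_all2 (\<le>) xs ys \<Longrightarrow> sum_list xs \<le> sum_list ys"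
  by (induction xs ys rule: list_all2_induct) auto

lemma top_sum_mono:
  assumes "\<And>i. i \<in> {1..n} \<Longrightarrow> f i \<le> g i"
  shows "top_sum j f n \<le> top_sum j g n"
proof -
  have "list_all2 (\<le>) (map f [1..<Suc n]) (map g [1..<Suc n])"
    using assms by (auto simp: list_all2_conv_all_nth simp del: upt_Suc)
  then have "list_all2 (\<le>) (sort (map f [1..<Suc n])) (sort (map g [1..<Suc n]))"
    by (rule sort_mono)
  then have "list_all2 (\<le>) (take j (rev (sort (map f [1..<Suc n])))) (take j (rev (sort (map g [1..<Suc n]))))"
    by (simp add: list_all2_rev list_all2_takeI)
  then show ?thesis unfolding top_sum_def by (rule sum_list_mono2)
qed



lemma period_int:
  assumes sp: "supply_pattern Per Theta m s" and th: "Theta > 0"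
  shows "((\<lambda>u. real (s u)) has_integral Theta) {real j * Per .. (real j + 1) * Per}"
proof -
  have e: "integral {real j * Per .. (real j + 1) * Per} (\<lambda>u. real (s u)) = Theta"
    using sp unfolding supply_pattern_def by blast
  then have "(\<lambda>u. real (s u)) integrable_on {real j * Per .. (real j + 1) * Per}"
    using th not_integrable_integral by fastforce
  with e show ?thesis by (simp add: has_integral_integrable_integral)
qed

lemma multi_period_int:
  assumes sp: "supply_pattern Per Theta m s" and th: "Theta > 0" and P: "Per > 0"
  shows "j0 \<le> j1 \<Longrightarrow> ((\<lambda>u. real (s u)) has_integral (real (j1 - j0) * Theta)) {real j0 * Per .. real j1 * Per}"
proof (induction j1 rule: dec_induct)
  case base
  then show ?case by (simp add: has_integral_refl)
next
  case (step j)
  have h2: "((\<lambda>u. real (s u)) has_integral Theta) {real j * Per .. real (Suc j) * Per}"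
    using period_int[OF sp th, of j] by (simp add: algebra_simps)
  have "((\<lambda>u. real (s u)) has_integral (real (j - j0) * Theta + Theta)) {real j0 * Per .. real (Suc j) * Per}"
    by (rule has_integral_combine[OF _ _ step.IH h2]) (use step P in auto)
  moreover have "real (j - j0) * Theta + Theta = real (Suc j - j0) * Theta"
    using step by (simp add: Suc_diff_le algebra_simps)
  ultimately show ?case by simp
qed

lemma piece_bounds:
  assumes sp: "supply_pattern Per Theta m s" and th: "Theta > 0" and P: "Per > 0"
    and xy: "real j * Per \<le> x" "x \<le> y" "y \<le> (real j + 1) * Per"
  shows "(\<lambda>u. real (s u)) integrable_on {x..y}"
    "0 \<le> integral {x..y} (\<lambda>u. real (s u))"
    "integral {x..y} (\<lambda>u. real (s u)) \<le> Theta"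
    "integral {x..y} (\<lambda>u. real (s u)) \<le> real m * (y - x)"
proof -
  let ?f = "\<lambda>u. real (s u)"
  let ?a = "real j * Per" and ?b = "(real j + 1) * Per"
  have I: "?f integrable_on {?a..?b}" "integral {?a..?b} ?f = Theta"
    using period_int[OF sp th, of j] by auto
  have "0 \<le> real j * Per" using P by simp
  then have x0: "0 \<le> x" using xy by linarith
  show i1: "?f integrable_on {x..y}"
    by (rule integrable_subinterval_real[OF I(1)]) (use xy in auto)
  show "0 \<le> integral {x..y} ?f" by (rule integral_nonneg[OF i1]) auto
  have i2: "?f integrable_on {?a..y}"
    by (rule integrable_subinterval_real[OF I(1)]) (use xy in auto)
  have "integral {?a..x} ?f + integral {x..y} ?f = integral {?a..y} ?f"
    by (rule Henstock_Kurzweil_Integration.integral_combine) (use xy i2 in auto)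
  moreover have "integral {?a..y} ?f + integral {y..?b} ?f = Theta"
    using Henstock_Kurzweil_Integration.integral_combine[of ?a y ?b ?f] I xy by auto
  moreover have "0 \<le> integral {?a..x} ?f"
    by (rule integral_nonneg[OF integrable_subinterval_real[OF I(1)]]) (use xy in auto)
  moreover have "0 \<le> integral {y..?b} ?f"
    by (rule integral_nonneg[OF integrable_subinterval_real[OF I(1)]]) (use xy in auto)
  ultimately show "integral {x..y} ?f \<le> Theta" by linarith
  have "integral {x..y} ?f \<le> integral {x..y} (\<lambda>u. real m)"
  proof (rule integral_le[OF i1])
    have "\<forall>t\<ge>0. s t \<le> m" using sp unfolding supply_pattern_def by blast
    then show "\<And>u. u \<in> {x..y} \<Longrightarrow> real (s u) \<le> real m" using x0 by auto
  qed (rule Henstock_Kurzweil_Integration.integrable_const_ivl)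
  then show "integral {x..y} ?f \<le> real m * (y - x)" using xy by (simp add: mult.commute)
qed



lemma piece_alg:
  fixes th Theta m l I :: real
  assumes "0 < m" "0 \<le> th" "th \<le> m" "0 \<le> l" "I \<le> Theta" "I \<le> m * l" "0 \<le> Theta"
  shows "th * l - I \<ge> th * Theta / m - Theta"
proof (cases "m * l \<le> Theta")
  case True
  have "l \<le> Theta / m" using True assms by (simp add: field_simps)
  have 1: "th * l - I \<ge> (th - m) * l" using assms by (simp add: algebra_simps)
  have 2: "(th - m) * l \<ge> (th - m) * (Theta / m)"
    by (rule mult_left_mono_neg) (use \<open>l \<le> Theta / m\<close> assms in auto)
  have 3: "(th - m) * (Theta / m) = th * Theta / m - Theta" using assms by (simp add: field_simps)
  show ?thesis using 1 2 3 by linarith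
next
  case False
  have "Theta / m \<le> l" using False assms by (simp add: field_simps)
  then have "th * (Theta / m) \<le> th * l" using assms by (intro mult_left_mono) auto
  then show ?thesis using assms by simp
qed

lemma window_bound:
  assumes sp: "supply_pattern Per Theta m s" and th: "Theta > 0" and P: "Per > 0"
    and mpos: "m > 0" and thmP: "Theta \<le> real m * Per"
    and t0: "t0 \<ge> 0" and t: "t \<ge> 0"
  shows "integral {t0..t0+t} (\<lambda>u. real (s u)) \<ge> Theta / Per * t - Theta / Per * (2 + 2 * (Per - Theta / real m))"
proof -
  let ?f = "\<lambda>u. real (s u)"
  define j0 where "j0 = nat \<lfloor>t0 / Per\<rfloor>"
  define j1 where "j1 = nat \<lceil>(t0 + t) / Per\<rceil>"
  have fl0: "0 \<le> \<lfloor>t0 / Per\<rfloor>" using t0 P by simp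
  have "0 \<le> (t0 + t) / Per" using t0 t P by simp
  then have cl0: "0 \<le> \<lceil>(t0 + t) / Per\<rceil>" by (metis ceiling_mono ceiling_zero)
  have rj0: "real j0 = of_int \<lfloor>t0 / Per\<rfloor>" unfolding j0_def using fl0 by simp
  have rj1: "real j1 = of_int \<lceil>(t0 + t) / Per\<rceil>" unfolding j1_def using cl0 by simp
  have j0a: "real j0 * Per \<le> t0" "t0 < (real j0 + 1) * Per"
    unfolding rj0 using floor_divide_lower[OF P, of t0] floor_divide_upper[OF P, of t0] by auto
  have j1a': "t0 + t \<le> real j1 * Per" "(real j1 - 1) * Per < t0 + t"
    unfolding rj1 using ceiling_divide_upper[OF P, of "t0+t"] ceiling_divide_lower[OF P, of "t0+t"] by auto
  have j1a: "t0 + t \<le> real j1 * Per" "real j1 * Per < t0 + t + Per"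
    using j1a' by (auto simp: algebra_simps)
  have "real j0 * Per \<le> real j1 * Per" using j0a j1a t by linarith
  then have j01: "j0 \<le> j1" using P by simp
  have H: "(?f has_integral (real (j1 - j0) * Theta)) {real j0 * Per .. real j1 * Per}"
    by (rule multi_period_int[OF sp th P j01])
  define a where "a = t0 - real j0 * Per"
  define b where "b = real j1 * Per - (t0 + t)"
  have ab: "real (j1 - j0) * Per = a + t + b" using j01 unfolding a_def b_def by (simp add: algebra_simps of_nat_diff)
  have int0: "?f integrable_on {real j0 * Per .. t0 + t}"
    by (rule integrable_subinterval_real[OF has_integral_integrable[OF H]]) (use j1a in auto)
  have c1: "integral {real j0 * Per .. t0 + t} ?f + integral {t0 + t .. real j1 * Per} ?f = real (j1 - j0) * Theta"
    using Henstock_Kurzweil_Integration.integral_combine[OF _ _ has_integral_integrable[OF H], of "t0+t"] H j0a j1a t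
    by (simp add: integral_unique)
  have c2: "integral {real j0 * Per .. t0} ?f + integral {t0 .. t0 + t} ?f = integral {real j0 * Per .. t0 + t} ?f"
    by (rule Henstock_Kurzweil_Integration.integral_combine[OF _ _ int0]) (use j0a t in auto)
  have pa: "integral {real j0 * Per .. t0} ?f \<le> Theta" "integral {real j0 * Per .. t0} ?f \<le> real m * a"
    using piece_bounds(3,4)[OF sp th P, of j0 "real j0 * Per" t0] j0a unfolding a_def by auto
  have j1b: "real (j1 - 1) * Per \<le> t0 + t" "real j1 * Per \<le> (real (j1 - 1) + 1) * Per"
  proof -
    show "real (j1 - 1) * Per \<le> t0 + t"
    proof (cases "j1 = 0")
      case True then show ?thesis using t0 t by simp
    next
      case False then have "real (j1 - 1) = real j1 - 1" by (simp add: of_nat_diff)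
      then show ?thesis using j1a by (simp add: algebra_simps)
    qed
    show "real j1 * Per \<le> (real (j1 - 1) + 1) * Per" using P by (cases "j1 = 0") (auto simp: of_nat_diff)
  qed
  have pb: "integral {t0 + t .. real j1 * Per} ?f \<le> Theta" "integral {t0 + t .. real j1 * Per} ?f \<le> real m * b"
    using piece_bounds(3,4)[OF sp th P, of "j1 - 1" "t0 + t" "real j1 * Per"] j1a j1b unfolding b_def by auto
  define tt where "tt = Theta / Per"
  have tt0: "0 \<le> tt" "tt \<le> real m" using th P thmP unfolding tt_def by (auto simp: field_simps)
  have a0: "0 \<le> a" using j0a unfolding a_def by simp
  have b0: "0 \<le> b" using j1a unfolding b_def by simp
  have ea: "tt * a - integral {real j0 * Per .. t0} ?f \<ge> tt * Theta / real m - Theta"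
    by (rule piece_alg) (use mpos tt0 a0 pa th in auto)
  have eb: "tt * b - integral {t0 + t .. real j1 * Per} ?f \<ge> tt * Theta / real m - Theta"
    by (rule piece_alg) (use mpos tt0 b0 pb th in auto)
  have "real (j1 - j0) * Theta = tt * (a + t + b)"
  proof -
    have "tt * (a + t + b) = tt * (real (j1 - j0) * Per)" using ab by simp
    also have "\<dots> = real (j1 - j0) * Theta" unfolding tt_def using P by (simp add: field_simps)
    finally show ?thesis by simp
  qed
  then have EQ: "integral {t0 .. t0 + t} ?f = tt * t + (tt * a - integral {real j0 * Per .. t0} ?f)
       + (tt * b - integral {t0 + t .. real j1 * Per} ?f)"
    using c1 c2 by (simp add: algebra_simps)
  define K where "K = tt * Theta / real m - Theta"
  have ea': "K \<le> tt * a - integral {real j0 * Per .. t0} ?f" using ea unfolding K_def .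
  have eb': "K \<le> tt * b - integral {t0 + t .. real j1 * Per} ?f" using eb unfolding K_def .
  have L: "integral {t0 .. t0 + t} ?f \<ge> tt * t + 2 * K" using EQ ea' eb' by linarith
  have "tt * t - tt * (2 + 2 * (Per - Theta / real m)) \<le> tt * t + 2 * K"
    using tt0 P unfolding tt_def K_def by (simp add: field_simps)
  then show ?thesis using L unfolding tt_def by linarith
qed



lemma floor_in_period:
  fixes Per u :: real
  assumes P: "Per > 0" and "real j * Per \<le> u" "u < (real j + 1) * Per"
  shows "\<lfloor>u / Per\<rfloor> = int j"
proof -
  have "real j \<le> u / Per" "u / Per < real j + 1" using assms by (simp_all add: field_simps)
  then show ?thesis by (simp add: floor_eq_iff)
qed

definition spat :: "real \<Rightarrow> real \<Rightarrow> nat \<Rightarrow> real \<Rightarrow> nat" where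
  "spat Per Theta m u = (if u - Per * of_int \<lfloor>u / Per\<rfloor> < Theta / real m then m else 0)"

lemma spat_period:
  assumes P: "Per > 0" and mpos: "m > 0" and th: "0 \<le> Theta" "Theta \<le> real m * Per"
  shows "((\<lambda>u. real (spat Per Theta m u)) has_integral Theta) {real j * Per .. (real j + 1) * Per}"
proof -
  let ?f = "\<lambda>u. real (spat Per Theta m u)"
  define a where "a = real j * Per"
  define c where "c = a + Theta / real m"
  define b where "b = (real j + 1) * Per"
  have ac: "a \<le> c" unfolding c_def using th mpos by simp
  have "Theta / real m \<le> Per" using th mpos by (simp add: field_simps)
  then have cb: "c \<le> b" unfolding c_def a_def b_def by (simp add: algebra_simps)
  have fl: "\<lfloor>u / Per\<rfloor> = int j" if "a \<le> u" "u < b" for u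
    using floor_in_period[OF P] that unfolding a_def b_def by blast
  have h1: "(?f has_integral (real m * (c - a))) {a..c}"
  proof (rule has_integral_spike_finite[where S="{c}" and f="\<lambda>u. real m"])
    show "finite {c}" by simp
    show "((\<lambda>u. real m) has_integral real m * (c - a)) {a..c}"
      using has_integral_const_real[of "real m" a c] ac by (simp add: mult.commute)
    fix u assume u: "u \<in> {a..c} - {c}"
    then have "u < b" "a \<le> u" "u < c" using cb by auto
    then have "\<lfloor>u / Per\<rfloor> = int j" using fl by blast
    moreover have "u - Per * real j < Theta / real m" using \<open>u < c\<close> unfolding c_def a_def by (simp add: algebra_simps)
    ultimately show "?f u = real m" unfolding spat_def by simp
  qed
  have h2: "(?f has_integral 0) {c..b}"
  proof (rule has_integral_spike_finite[where S="{c, b}" and f="\<lambda>u. 0"])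
    show "finite {c, b}" by simp
    show "((\<lambda>u. 0) has_integral (0::real)) {c..b}" by simp
    fix u assume u: "u \<in> {c..b} - {c, b}"
    then have "u < b" "a \<le> u" "c < u" using ac by auto
    then have "\<lfloor>u / Per\<rfloor> = int j" using fl by blast
    moreover have "\<not> u - Per * real j < Theta / real m" using \<open>c < u\<close> unfolding c_def a_def by (simp add: algebra_simps)
    ultimately show "?f u = 0" unfolding spat_def by simp
  qed
  have "(?f has_integral (real m * (c - a) + 0)) {a..b}"
    by (rule has_integral_combine[OF ac cb h1 h2])
  moreover have "real m * (c - a) + 0 = Theta" unfolding c_def using mpos by simp
  ultimately show ?thesis unfolding a_def b_def by simp
qed

lemma spat_pc:
  assumes P: "Per > 0" and mpos: "m > 0"
  shows "piecewise_constant_nonneg (spat Per Theta m)"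
  unfolding piecewise_constant_nonneg_def
proof (intro allI impI)
  fix b0 :: real assume b0: "0 \<le> b0"
  define N where "N = nat \<lceil>b0 / Per\<rceil>"
  define Q where "Q = (\<lambda>j. real j * Per) ` {..N} \<union> (\<lambda>j. real j * Per + Theta / real m) ` {..N}"
  have inN: "j \<le> N" if "real j * Per \<le> b0" for j
  proof -
    have "real j \<le> b0 / Per" using that P by (simp add: field_simps)
    then have "real j \<le> of_int \<lceil>b0 / Per\<rceil>" by (meson le_of_int_ceiling order_trans)
    then show ?thesis unfolding N_def by linarith
  qed
  have "finite Q" unfolding Q_def by simp
  moreover have "spat Per Theta m x = spat Per Theta m y"
    if xy: "0 \<le> x" "x \<le> y" "y \<le> b0" "{x..y} \<inter> Q = {}" for x y
  proof -
    define j where "j = nat \<lfloor>x / Per\<rfloor>"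
    have "0 \<le> x / Per" using xy P by simp
    then have fx0: "0 \<le> \<lfloor>x / Per\<rfloor>" by simp
    then have rj: "real j = of_int \<lfloor>x / Per\<rfloor>" unfolding j_def by simp
    have jx: "real j * Per \<le> x" "x < (real j + 1) * Per"
      unfolding rj using floor_divide_lower[OF P, of x] floor_divide_upper[OF P, of x] by auto
    have "y < (real j + 1) * Per"
    proof (rule ccontr)
      assume "\<not> y < (real j + 1) * Per"
      then have "real (Suc j) * Per \<in> {x..y}" using jx by (auto simp: algebra_simps)
      moreover have "Suc j \<le> N" using inN[of "Suc j"] \<open>\<not> y < (real j + 1) * Per\<close> xy by (auto simp: algebra_simps)
      then have "real (Suc j) * Per \<in> Q" unfolding Q_def by blast
      ultimately show False using xy(4) by blast
    qed
    then have fy: "\<lfloor>y / Per\<rfloor> = int j" using floor_in_period[OF P] jx xy by auto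
    have fx: "\<lfloor>x / Per\<rfloor> = int j" using fx0 unfolding j_def by simp
    have "(x - Per * real j < Theta / real m) = (y - Per * real j < Theta / real m)"
    proof (rule ccontr)
      assume ne: "(x - Per * real j < Theta / real m) \<noteq> (y - Per * real j < Theta / real m)"
      then have "x - Per * real j < Theta / real m" "\<not> y - Per * real j < Theta / real m" using xy by auto
      then have "real j * Per + Theta / real m \<in> {x..y}" by (auto simp: algebra_simps)
      moreover have "j \<le> N" using inN[of j] jx xy by auto
      then have "real j * Per + Theta / real m \<in> Q" unfolding Q_def by blast
      ultimately show False using xy(4) by blast
    qed
    then show ?thesis unfolding spat_def fx fy by simp
  qed
  ultimately show "\<exists>P. finite P \<and> (\<forall>x y. 0 \<le> x \<longrightarrow> x \<le> y \<longrightarrow> y \<le> b0 \<longrightarrow> {x..y} \<inter> P = {} \<longrightarrow>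
      spat Per Theta m x = spat Per Theta m y)" by blast
qed

lemma spat_supply:
  assumes P: "Per > 0" and mpos: "m > 0" and th: "0 \<le> Theta" "Theta \<le> real m * Per"
  shows "supply_pattern Per Theta m (spat Per Theta m)"
  unfolding supply_pattern_def
proof (intro conjI allI impI)
  show "piecewise_constant_nonneg (spat Per Theta m)" by (rule spat_pc[OF P mpos])
  fix t :: real show "spat Per Theta m t \<le> m" unfolding spat_def by simp
next
  fix j :: nat
  show "integral {real j * Per..(real j + 1) * Per} (\<lambda>u. real (spat Per Theta m u)) = Theta"
    using spat_period[OF P mpos th, of j] by (simp add: integral_unique)
qed

lemma sbf_lower:
  assumes P: "Per > 0" and mpos: "m > 0" and th: "0 < Theta" "Theta \<le> real m * Per" and t: "t \<ge> 0"
  shows "sbf Per Theta m t \<ge> Theta / Per * t - Theta / Per * (2 + 2 * (Per - Theta / real m))"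
  unfolding sbf_def
proof (rule cInf_greatest)
  show "{integral {t0..t0 + t} (\<lambda>u. real (s u)) |s t0. supply_pattern Per Theta m s \<and> 0 \<le> t0} \<noteq> {}"
    using spat_supply[OF P mpos _ th(2)] th(1) by fastforce
  fix x assume "x \<in> {integral {t0..t0 + t} (\<lambda>u. real (s u)) |s t0. supply_pattern Per Theta m s \<and> 0 \<le> t0}"
  then obtain s t0 where "x = integral {t0..t0 + t} (\<lambda>u. real (s u))" "supply_pattern Per Theta m s" "0 \<le> t0"
    by blast
  then show "Theta / Per * t - Theta / Per * (2 + 2 * (Per - Theta / real m)) \<le> x"
    using window_bound[OF _ th(1) P mpos th(2) _ t] by simp
qed



lemma CI_bounds:
  assumes "0 < Ci" shows "0 \<le> CI Ti Ci Di t" "CI Ti Ci Di t \<le> Ci"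
  using assms unfolding CI_def by auto

lemma floor_term:
  fixes Ti Ci Di t :: real
  assumes "0 < Ci" "0 < Ti"
  shows "of_int \<lfloor>(t + Ti - Di) / Ti\<rfloor> * Ci \<le> (t + Ti - Di) * Ci / Ti"
proof -
  have "of_int \<lfloor>(t + Ti - Di) / Ti\<rfloor> * Ci \<le> (t + Ti - Di) / Ti * Ci"
    by (rule mult_right_mono) (use assms in auto)
  then show ?thesis by simp
qed

lemma Ihat_le:
  assumes "0 < C i" "0 < T i"
  shows "Ihat T C D k t i \<le> (t + T i - D i) * C i / T i - (if i = k then C k else 0)"
proof -
  have "W (T i) (C i) (D i) t - CI (T i) (C i) (D i) t \<le> (t + T i - D i) * C i / T i"
    unfolding W_def using floor_term[OF assms, of t "D i"] by simp
  then show ?thesis unfolding Ihat_def by (auto simp: min_def)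
qed

lemma diff_le:
  assumes "0 < C i"
  shows "Ibar T C D k t i - Ihat T C D k t i \<le> C i"
proof -
  have "CI (T i) (C i) (D i) t \<le> C i" "0 \<le> CI (T i) (C i) (D i) t" using CI_bounds[OF assms] by auto
  then show ?thesis unfolding Ibar_def Ihat_def by (auto simp: min_def)
qed

lemma dem_upper:
  assumes tasks: "\<forall>i\<in>{1..n}. 0 < C i \<and> C i \<le> D i \<and> D i \<le> T i"
    and k_in: "k \<in> {1..n}"
  shows "dem T C D n k t m' \<le> real m' * C k + t * (\<Sum>i=1..n. C i / T i)
      + (\<Sum>i=1..n. (T i - D i) * C i / T i) - C k + top_sum (m' - 1) C n"
proof -
  have s1: "(\<Sum>i=1..n. Ihat T C D k t i) \<le> (\<Sum>i=1..n. (t + T i - D i) * C i / T i - (if i = k then C k else 0))"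
  proof (rule sum_mono, rule Ihat_le)
    fix i assume "i \<in> {1..n}"
    then have "0 < C i" "C i \<le> D i" "D i \<le> T i" using tasks by auto
    then show "0 < C i" "0 < T i" by linarith+
  qed
  have s2: "(\<Sum>i=1..n. (t + T i - D i) * C i / T i - (if i = k then C k else 0))
     = (\<Sum>i=1..n. (t + T i - D i) * C i / T i) - C k"
    using k_in by (simp add: sum_subtractf)
  have s3: "(\<Sum>i=1..n. (t + T i - D i) * C i / T i) = (\<Sum>i=1..n. t * (C i / T i) + (T i - D i) * C i / T i)"
    by (rule sum.cong) (auto simp: add_divide_distrib diff_divide_distrib algebra_simps)
  have s4: "(\<Sum>i=1..n. t * (C i / T i) + (T i - D i) * C i / T i)
      = t * (\<Sum>i=1..n. C i / T i) + (\<Sum>i=1..n. (T i - D i) * C i / T i)"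
    by (simp add: sum.distrib sum_distrib_left)
  have s5: "top_sum (m' - 1) (\<lambda>i. Ibar T C D k t i - Ihat T C D k t i) n \<le> top_sum (m' - 1) C n"
    by (rule top_sum_mono, rule diff_le) (use tasks in auto)
  show ?thesis unfolding dem_def using s1 s2 s3 s4 s5 by linarith
qed

theorem theorem2:
  fixes T C D :: "nat \<Rightarrow> real" and n k m' :: nat and Per Theta :: real
  assumes tasks: "\<forall>i\<in>{1..n}. 0 < C i \<and> C i \<le> D i \<and> D i \<le> T i"
    and m_pos: "m' > 0"
    and Pi_pos: "Per > 0"
    and Theta_bounds: "0 \<le> Theta" "Theta \<le> real m' * Per"
    and util: "(\<Sum>i=1..n. C i / T i) < Theta / Per"
    and k_in: "k \<in> {1..n}"
    and ex: "\<exists>A\<ge>0. dem T C D n k (A + D k) m' > sbf Per Theta m' (A + D k)"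
  shows "\<exists>A\<ge>0. dem T C D n k (A + D k) m' > sbf Per Theta m' (A + D k) \<and>
           A < (top_sum (m' - 1) C n + real m' * C k
                 - D k * (Theta / Per - (\<Sum>i=1..n. C i / T i))
                 + (\<Sum>i=1..n. (T i - D i) * C i / T i)
                 + Theta / Per * (2 + 2 * (Per - Theta / real m')))
               / (Theta / Per - (\<Sum>i=1..n. C i / T i))"
proof -
  obtain A where A0: "A \<ge> 0" and Ad: "dem T C D n k (A + D k) m' > sbf Per Theta m' (A + D k)"
    using ex by blast
  define u where "u = (\<Sum>i=1..n. C i / T i)"
  define Uc where "Uc = (\<Sum>i=1..n. (T i - D i) * C i / T i)"
  define CS where "CS = top_sum (m' - 1) C n"
  define th where "th = Theta / Per"
  define B where "B = Theta / Per * (2 + 2 * (Per - Theta / real m'))"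
  have Ck: "0 < C k" "C k \<le> D k" using tasks k_in by auto
  have u0: "0 < u" unfolding u_def
  proof (rule sum_pos2[of _ k])
    have "0 < C k" "C k \<le> D k" "D k \<le> T k" using tasks k_in by auto
    then show "C k / T k > 0" by simp
    fix i assume "i \<in> {1..n}"
    then have "0 < C i" "C i \<le> D i" "D i \<le> T i" using tasks by auto
    then show "0 \<le> C i / T i" by simp
  qed (use k_in in auto)
  have Theta0: "0 < Theta" using u0 util Pi_pos unfolding u_def by (smt (verit) divide_nonpos_pos)
  have pos: "th - u > 0" using util unfolding u_def th_def by simp
  have t0: "A + D k \<ge> 0" using A0 Ck by linarith
  have sb: "sbf Per Theta m' (A + D k) \<ge> th * (A + D k) - B"
    using sbf_lower[OF Pi_pos m_pos Theta0 Theta_bounds(2) t0] unfolding th_def B_def by simp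
  have de: "dem T C D n k (A + D k) m' \<le> real m' * C k + (A + D k) * u + Uc - C k + CS"
    using dem_upper[OF tasks k_in] unfolding u_def Uc_def CS_def by blast
  have "A < (CS + real m' * C k - D k * (th - u) + Uc + B) / (th - u)"
  proof (rule ccontr)
    assume "\<not> ?thesis"
    then have "(CS + real m' * C k - D k * (th - u) + Uc + B) \<le> A * (th - u)"
      using pos by (simp add: field_simps)
    then have "th * (A + D k) - B \<ge> u * (A + D k) + CS + real m' * C k + Uc"
      by (simp add: algebra_simps)
    then show False using sb de Ad Ck by (simp add: algebra_simps)
  qed
  then show ?thesis using A0 Ad unfolding u_def Uc_def CS_def th_def B_def by blast
qed

end
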